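(* For integers $r_1\le s_1<0$ and $r_2\le s_2<0$, $\mathfrak n(V_{r_1s_1},V_{r_2s_2})=0$ if and only if $s_2<s_1$ or $r_2<r_1$; and $\mathfrak n(V_{rs},V_{rs})=\mathbb K\,\mathrm{Id}$.
   Context: $V_{rs}=\bigoplus_{i=r}^sE_i$ with $\dim E_i=1$ in degree $i$, and $\delta_{rs}$ maps $E_i$ onto $E_{i-1}$ ($r<i\le s$) and $E_r$ to $0$. Each $V_{rs}$ is made an irreducible $\mathfrak{sl}_2$-module via an $\mathfrak{sl}_2$-triple $(\delta_{rs},H,Y)$ in $\mathfrak{gl}(V_{rs})$ with $H$ of degree $0$, $Y$ of degree $1$, $[H,\delta_{rs}]=2\delta_{rs}$, $[H,Y]=-2Y$, $[\delta_{rs},Y]=H$. $\operatorname{Hom}(V_{r_1s_1},V_{r_2s_2})$ carries the induced $\mathfrak{sl}_2$-module structure and grading (degree $k$ maps send $E_i$ to $E_{i+k}$); $\mathfrak n(V_{r_1s_1},V_{r_2s_2})$ is its maximal $\mathfrak{sl}_2$-submodule contained in the sum of components of nonnegative degree. *)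

theory Defs
  imports "Jordan_Normal_Form.Matrix"
begin

text \<open>The graded space V_{rs} = E_r + ... + E_s is modelled by matrices: the basis vector
  with index p (0 <= p < dimV r s) spans E_{r+p}.  Linear maps V_{r1 s1} -> V_{r2 s2}
  are dimV r2 s2 x dimV r1 s1 matrices; entry (p,q) maps E_{r1+q} to E_{r2+p} and has
  degree (r2+p) - (r1+q).\<close>

definition dimV :: "int \<Rightarrow> int \<Rightarrow> nat" where
  "dimV r s = nat (s - r + 1)"

text \<open>delta_{rs}: maps E_i onto E_{i-1} (basis chosen so that the entries are 1), E_r to 0.\<close>
definition delta_mat :: "int \<Rightarrow> int \<Rightarrow> 'a::field mat" where
  "delta_mat r s = mat (dimV r s) (dimV r s) (\<lambda>(p, q). if q = p + 1 then 1 else 0)"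

text \<open>(delta_{rs}, H, Y) is an sl2-triple with H of degree 0 and Y of degree 1.\<close>
definition graded_sl2_triple :: "int \<Rightarrow> int \<Rightarrow> 'a::field mat \<Rightarrow> 'a mat \<Rightarrow> bool" where
  "graded_sl2_triple r s H Y \<longleftrightarrow>
     H \<in> carrier_mat (dimV r s) (dimV r s) \<and> Y \<in> carrier_mat (dimV r s) (dimV r s) \<and>
     (\<forall>p q. p < dimV r s \<longrightarrow> q < dimV r s \<longrightarrow> p \<noteq> q \<longrightarrow> H $$ (p, q) = 0) \<and>
     (\<forall>p q. p < dimV r s \<longrightarrow> q < dimV r s \<longrightarrow> p \<noteq> q + 1 \<longrightarrow> Y $$ (p, q) = 0) \<and>
     H * delta_mat r s - delta_mat r s * H = 2 \<cdot>\<^sub>m delta_mat r s \<and>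
     H * Y - Y * H = (- 2) \<cdot>\<^sub>m Y \<and>
     delta_mat r s * Y - Y * delta_mat r s = H"

definition hom_act :: "'a::field mat \<Rightarrow> 'a mat \<Rightarrow> 'a mat \<Rightarrow> 'a mat" where
  "hom_act X1 X2 \<phi> = X2 * \<phi> - \<phi> * X1"

definition hom_sl2_submodule ::
  "int \<Rightarrow> int \<Rightarrow> 'a::field mat \<Rightarrow> 'a mat \<Rightarrow> int \<Rightarrow> int \<Rightarrow> 'a mat \<Rightarrow> 'a mat \<Rightarrow> 'a mat set \<Rightarrow> bool" where
  "hom_sl2_submodule r1 s1 H1 Y1 r2 s2 H2 Y2 S \<longleftrightarrow>
     S \<subseteq> carrier_mat (dimV r2 s2) (dimV r1 s1) \<and>
     0\<^sub>m (dimV r2 s2) (dimV r1 s1) \<in> S \<and>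
     (\<forall>\<phi>\<in>S. \<forall>\<psi>\<in>S. \<phi> + \<psi> \<in> S) \<and>
     (\<forall>c. \<forall>\<phi>\<in>S. c \<cdot>\<^sub>m \<phi> \<in> S) \<and>
     (\<forall>\<phi>\<in>S. hom_act (delta_mat r1 s1) (delta_mat r2 s2) \<phi> \<in> S) \<and>
     (\<forall>\<phi>\<in>S. hom_act H1 H2 \<phi> \<in> S) \<and>
     (\<forall>\<phi>\<in>S. hom_act Y1 Y2 \<phi> \<in> S)"

definition nonneg_degree :: "int \<Rightarrow> int \<Rightarrow> int \<Rightarrow> int \<Rightarrow> 'a::field mat \<Rightarrow> bool" where
  "nonneg_degree r1 s1 r2 s2 \<phi> \<longleftrightarrow>
     (\<forall>p q. p < dimV r2 s2 \<longrightarrow> q < dimV r1 s1 \<longrightarrow>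
        (r2 + int p) - (r1 + int q) < 0 \<longrightarrow> \<phi> $$ (p, q) = 0)"

text \<open>n(V1,V2): the maximal sl2-submodule contained in the nonnegative-degree part,
  i.e. the union (= sum) of all such submodules.\<close>
definition n_max ::
  "int \<Rightarrow> int \<Rightarrow> 'a::field mat \<Rightarrow> 'a mat \<Rightarrow> int \<Rightarrow> int \<Rightarrow> 'a mat \<Rightarrow> 'a mat \<Rightarrow> 'a mat set" where
  "n_max r1 s1 H1 Y1 r2 s2 H2 Y2 =
     \<Union> {S. hom_sl2_submodule r1 s1 H1 Y1 r2 s2 H2 Y2 S \<and>
            (\<forall>\<phi>\<in>S. nonneg_degree r1 s1 r2 s2 \<phi>)}"

end

theory Submission
  imports Defs
begin


lemma mult_entry:
  assumes "A \<in> carrier_mat n m" "B \<in> carrier_mat m k" "i < n" "j < k"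
  shows "(A * B) $$ (i,j) = (\<Sum>l<m. A $$ (i,l) * B $$ (l,j))"
  using assms by (auto simp: scalar_prod_def lessThan_atLeast0 intro!: sum.cong)

lemma sum_single:
  fixes n k :: nat
  assumes "\<And>j. j < n \<Longrightarrow> j \<noteq> k \<Longrightarrow> f j = 0"
  shows "(\<Sum>j<n. f j) = (if k < n then f k else (0::'a::comm_monoid_add))"
proof (cases "k < n")
  case True
  have "(\<Sum>j<n. f j) = f k + (\<Sum>j\<in>{..<n}-{k}. f j)"
    using True by (subst sum.remove[OF finite_lessThan, of k]) auto
  also have "(\<Sum>j\<in>{..<n}-{k}. f j) = 0" using assms by (intro sum.neutral) auto
  finally show ?thesis using True by simp
next
  case False
  then show ?thesis using assms by (intro sum.neutral[THEN trans]) auto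
qed

lemma delta_carrier[simp]: "delta_mat r s \<in> carrier_mat (dimV r s) (dimV r s)"
  by (simp add: delta_mat_def)

lemma delta_dims[simp]: "dim_row (delta_mat r s) = dimV r s" "dim_col (delta_mat r s) = dimV r s"
  by (simp_all add: delta_mat_def)

lemma delta_index: "p < dimV r s \<Longrightarrow> q < dimV r s \<Longrightarrow> delta_mat r s $$ (p,q) = (if q = p + 1 then 1 else 0)"
  by (simp add: delta_mat_def)

lemma delta_left:
  assumes "A \<in> carrier_mat (dimV r s) m" "p < dimV r s" "q < m"
  shows "(delta_mat r s * A) $$ (p,q) = (if p + 1 < dimV r s then A $$ (p+1,q) else 0)"
  apply (subst mult_entry[OF delta_carrier assms])
  apply (subst sum_single[where k="p+1"])
  using assms by (auto simp: delta_index)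

lemma delta_right:
  assumes "A \<in> carrier_mat m (dimV r s)" "p < m" "q < dimV r s"
  shows "(A * delta_mat r s) $$ (p,q) = (if q \<ge> 1 then A $$ (p,q-1) else 0)"
  apply (subst mult_entry[OF assms(1) delta_carrier assms(2,3)])
  apply (subst sum_single[where k="q-1"])
  using assms by (auto simp: delta_index)

lemma diag_left:
  assumes "H \<in> carrier_mat n n" "\<And>p q. p < n \<Longrightarrow> q < n \<Longrightarrow> p \<noteq> q \<Longrightarrow> H $$ (p,q) = 0"
    "A \<in> carrier_mat n m" "p < n" "q < m"
  shows "(H * A) $$ (p,q) = H $$ (p,p) * A $$ (p,q)"
  apply (subst mult_entry[OF assms(1,3,4,5)])
  apply (subst sum_single[where k="p"])
  using assms by auto

lemma diag_right:
  assumes "H \<in> carrier_mat m m" "\<And>p q. p < m \<Longrightarrow> q < m \<Longrightarrow> p \<noteq> q \<Longrightarrow> H $$ (p,q) = 0"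
    "A \<in> carrier_mat n m" "p < n" "q < m"
  shows "(A * H) $$ (p,q) = A $$ (p,q) * H $$ (q,q)"
  apply (subst mult_entry[OF assms(3,1,4,5)])
  apply (subst sum_single[where k="q"])
  using assms by auto

lemma hom_act_carrier:
  "X1 \<in> carrier_mat n1 n1 \<Longrightarrow> X2 \<in> carrier_mat n2 n2 \<Longrightarrow> A \<in> carrier_mat n2 n1 \<Longrightarrow> hom_act X1 X2 A \<in> carrier_mat n2 n1"
  unfolding hom_act_def by auto

lemma hom_act_add:
  assumes "X1 \<in> carrier_mat n1 n1" "X2 \<in> carrier_mat n2 n2" "A \<in> carrier_mat n2 n1" "B \<in> carrier_mat n2 n1"
  shows "hom_act X1 X2 (A + B) = hom_act X1 X2 A + hom_act X1 X2 B"
  unfolding hom_act_def using assms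
  by (simp add: mult_add_distrib_mat[OF assms(2,3,4)] add_mult_distrib_mat[OF assms(3,4,1)])
     (intro eq_matI, auto)

lemma hom_act_smult:
  assumes "X1 \<in> carrier_mat n1 n1" "X2 \<in> carrier_mat n2 n2" "A \<in> carrier_mat n2 n1"
  shows "hom_act X1 X2 (c \<cdot>\<^sub>m A) = c \<cdot>\<^sub>m hom_act X1 X2 A"
  unfolding hom_act_def using assms
  by (simp add: mult_smult_distrib[OF assms(2,3)] mult_smult_assoc_mat[OF assms(3,1)])
     (intro eq_matI, auto simp: algebra_simps)

lemma hom_act_zero:
  assumes "X1 \<in> carrier_mat n1 n1" "X2 \<in> carrier_mat n2 n2"
  shows "hom_act X1 X2 (0\<^sub>m n2 n1) = 0\<^sub>m n2 n1"
  unfolding hom_act_def using assms by (intro eq_matI) auto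

lemma hom_act_comm:
  fixes A1 :: "'a::field mat"
  assumes a1: "A1 \<in> carrier_mat n1 n1" and a2: "A2 \<in> carrier_mat n2 n2"
    and b1: "B1 \<in> carrier_mat n1 n1" and b2: "B2 \<in> carrier_mat n2 n2"
    and p: "P \<in> carrier_mat n2 n1"
  shows "hom_act A1 A2 (hom_act B1 B2 P) - hom_act B1 B2 (hom_act A1 A2 P)
     = hom_act (A1 * B1 - B1 * A1) (A2 * B2 - B2 * A2) P"
proof -
  have c: "B2 * P \<in> carrier_mat n2 n1" "P * B1 \<in> carrier_mat n2 n1"
     "A2 * P \<in> carrier_mat n2 n1" "P * A1 \<in> carrier_mat n2 n1"
     "A2 * B2 \<in> carrier_mat n2 n2" "B2 * A2 \<in> carrier_mat n2 n2"
     "A1 * B1 \<in> carrier_mat n1 n1" "B1 * A1 \<in> carrier_mat n1 n1"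
    using assms by auto
  have e: "A2 * (B2 * P) = A2 * B2 * P" "B2 * (A2 * P) = B2 * A2 * P"
     "A2 * (P * B1) = A2 * P * B1" "B2 * (P * A1) = B2 * P * A1"
     "P * B1 * A1 = P * (B1 * A1)" "P * A1 * B1 = P * (A1 * B1)"
    using assms by (auto intro!: assoc_mult_mat[symmetric] assoc_mult_mat)
  show ?thesis
    unfolding hom_act_def
    apply (subst mult_minus_distrib_mat[OF a2 c(1,2)])
    apply (subst minus_mult_distrib_mat[OF c(1,2) a1])
    apply (subst mult_minus_distrib_mat[OF b2 c(3,4)])
    apply (subst minus_mult_distrib_mat[OF c(3,4) b1])
    apply (subst minus_mult_distrib_mat[OF c(5,6) p])
    apply (subst mult_minus_distrib_mat[OF p c(7,8)])
    apply (simp only: e)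
    apply (intro eq_matI)
    using assms apply (auto simp del: index_mult_mat simp: index_mult_mat(2,3))
    done
qed



abbreviation Eo :: "int \<Rightarrow> int \<Rightarrow> int \<Rightarrow> int \<Rightarrow> 'a::field mat \<Rightarrow> 'a mat" where
  "Eo r1 s1 r2 s2 \<equiv> hom_act (delta_mat r1 s1) (delta_mat r2 s2)"

lemma E_carrier: "A \<in> carrier_mat (dimV r2 s2) (dimV r1 s1) \<Longrightarrow> Eo r1 s1 r2 s2 A \<in> carrier_mat (dimV r2 s2) (dimV r1 s1)"
  by (rule hom_act_carrier) auto

lemma E_index:
  assumes "A \<in> carrier_mat (dimV r2 s2) (dimV r1 s1)" "p < dimV r2 s2" "q < dimV r1 s1"
  shows "Eo r1 s1 r2 s2 A $$ (p,q) = (if p + 1 < dimV r2 s2 then A $$ (p+1,q) else 0) - (if q \<ge> 1 then A $$ (p,q-1) else 0)"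
proof -
  have d: "dim_row (A * delta_mat r1 s1) = dimV r2 s2" "dim_col (A * delta_mat r1 s1) = dimV r1 s1"
    using assms by auto
  show ?thesis unfolding hom_act_def
    by (subst index_minus_mat(1)) (use assms d in \<open>simp_all add: delta_left[OF assms] delta_right[OF assms] del: index_mult_mat\<close>)
qed

lemma ker_walk:
  fixes A :: "'a::field mat"
  assumes A: "A \<in> carrier_mat n2 n1"
    and K: "\<And>p q. p < n2 \<Longrightarrow> q < n1 \<Longrightarrow> (if p + 1 < n2 then A $$ (p+1,q) else 0) - (if q \<ge> 1 then A $$ (p,q-1) else 0) = 0"
  shows "\<And>p q. p < n2 \<Longrightarrow> q < n1 \<Longrightarrow> q < p \<Longrightarrow> A $$ (p,q) = 0"
    and "\<And>p q. p < n2 \<Longrightarrow> q < n1 \<Longrightarrow> int p - int q > int n2 - int n1 \<Longrightarrow> A $$ (p,q) = 0"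
    and "\<And>p. p < n2 \<Longrightarrow> p < n1 \<Longrightarrow> A $$ (p,p) = A $$ (0,0)"
proof -
  have D: "A $$ (p+1,q+1) = A $$ (p,q)" if "p+1 < n2" "q+1 < n1" for p q
    using K[of p "q+1"] that by auto
  have B1: "A $$ (p+1,0) = 0" if "p+1 < n2" "0 < n1" for p
    using K[of p 0] that by auto
  have B2: "A $$ (n2-1,q) = 0" if "q+1 < n1" "0 < n2" for q
    using K[of "n2-1" "q+1"] that by auto
  show i: "A $$ (p,q) = 0" if "p < n2" "q < n1" "q < p" for p q
    using that
  proof (induction q arbitrary: p)
    case 0
    then show ?case using B1[of "p-1"] by auto
  next
    case (Suc q)
    then have "A $$ (p,Suc q) = A $$ (p-1,q)" using D[of "p-1" q] by auto
    then show ?case using Suc by auto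
  qed
  show "A $$ (p,q) = 0" if "p < n2" "q < n1" "int p - int q > int n2 - int n1" for p q
  proof -
    have "\<forall>p q. n2 - 1 - p = m \<longrightarrow> p < n2 \<longrightarrow> q < n1 \<longrightarrow> int p - int q > int n2 - int n1 \<longrightarrow> A $$ (p,q) = 0" for m
    proof (induction m)
      case 0
      show ?case
      proof (intro allI impI)
        fix p q assume h: "n2 - 1 - p = 0" "p < n2" "q < n1" "int n2 - int n1 < int p - int q"
        then have "p = n2 - 1" "q + 1 < n1" by auto
        then show "A $$ (p,q) = 0" using B2[of q] h by auto
      qed
    next
      case (Suc m)
      show ?case
      proof (intro allI impI)
        fix p q assume h: "n2 - 1 - p = Suc m" "p < n2" "q < n1" "int n2 - int n1 < int p - int q"
        then have "A $$ (p+1,q+1) = A $$ (p,q)" by (intro D) auto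
        moreover have "A $$ (p+1,q+1) = 0" using Suc.IH h by auto
        ultimately show "A $$ (p,q) = 0" by simp
      qed
    qed
    then show ?thesis using that by blast
  qed
  show "A $$ (p,p) = A $$ (0,0)" if "p < n2" "p < n1" for p
    using that
  proof (induction p)
    case 0 then show ?case by simp
  next
    case (Suc p) then show ?case using D[of p p] by auto
  qed
qed

lemma E_step:
  fixes A :: "'a::field mat"
  assumes A: "A \<in> carrier_mat (dimV r2 s2) (dimV r1 s1)"
    and Z: "\<And>p q. p < dimV r2 s2 \<Longrightarrow> q < dimV r1 s1 \<Longrightarrow> int p - int q > t \<Longrightarrow> A $$ (p,q) = 0"
  shows "\<And>p q. p < dimV r2 s2 \<Longrightarrow> q < dimV r1 s1 \<Longrightarrow> int p - int q > t - 1 \<Longrightarrow> Eo r1 s1 r2 s2 A $$ (p,q) = 0"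
  using A Z by (auto simp: E_index)

lemma E_nilp:
  fixes A :: "'a::field mat"
  assumes A: "A \<in> carrier_mat (dimV r2 s2) (dimV r1 s1)"
  shows "(Eo r1 s1 r2 s2 ^^ (dimV r1 s1 + dimV r2 s2)) A = 0\<^sub>m (dimV r2 s2) (dimV r1 s1)"
proof -
  let ?n1 = "dimV r1 s1" and ?n2 = "dimV r2 s2"
  have "(Eo r1 s1 r2 s2 ^^ k) A \<in> carrier_mat ?n2 ?n1 \<and>
    (\<forall>p q. p < ?n2 \<longrightarrow> q < ?n1 \<longrightarrow> int p - int q > int ?n2 - 1 - int k \<longrightarrow> (Eo r1 s1 r2 s2 ^^ k) A $$ (p,q) = 0)" for k
  proof (induction k)
    case 0 then show ?case using A by auto
  next
    case (Suc k)
    have c: "(Eo r1 s1 r2 s2 ^^ k) A \<in> carrier_mat ?n2 ?n1" using Suc by blast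
    have z: "\<And>p q. p < ?n2 \<Longrightarrow> q < ?n1 \<Longrightarrow> int p - int q > int ?n2 - 1 - int k \<Longrightarrow> (Eo r1 s1 r2 s2 ^^ k) A $$ (p,q) = 0"
      using Suc by blast
    have "\<And>p q. p < ?n2 \<Longrightarrow> q < ?n1 \<Longrightarrow> int p - int q > (int ?n2 - 1 - int k) - 1 \<Longrightarrow> Eo r1 s1 r2 s2 ((Eo r1 s1 r2 s2 ^^ k) A) $$ (p,q) = 0"
      by (rule E_step[OF c z]) 
    moreover have "int ?n2 - 1 - int (Suc k) = (int ?n2 - 1 - int k) - 1" by simp
    ultimately show ?case using E_carrier[OF c] by (simp only: funpow.simps o_apply) metis
  qed
  from this[of "?n1 + ?n2"] have h: "(Eo r1 s1 r2 s2 ^^ (?n1 + ?n2)) A \<in> carrier_mat ?n2 ?n1"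
    "\<And>p q. p < ?n2 \<Longrightarrow> q < ?n1 \<Longrightarrow> (Eo r1 s1 r2 s2 ^^ (?n1 + ?n2)) A $$ (p,q) = 0"
    by auto
  show ?thesis using h by (intro eq_matI) auto
qed

lemma top_vector:
  fixes A :: "'a::field mat"
  assumes S: "S \<subseteq> carrier_mat (dimV r2 s2) (dimV r1 s1)" "\<forall>B\<in>S. Eo r1 s1 r2 s2 B \<in> S"
    and A: "A \<in> S" "A \<noteq> 0\<^sub>m (dimV r2 s2) (dimV r1 s1)"
  shows "\<exists>j. (Eo r1 s1 r2 s2 ^^ j) A \<noteq> 0\<^sub>m (dimV r2 s2) (dimV r1 s1) \<and>
     Eo r1 s1 r2 s2 ((Eo r1 s1 r2 s2 ^^ j) A) = 0\<^sub>m (dimV r2 s2) (dimV r1 s1)"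
proof -
  let ?E = "Eo r1 s1 r2 s2" and ?Z = "0\<^sub>m (dimV r2 s2) (dimV r1 s1) :: 'a mat"
  have Ac: "A \<in> carrier_mat (dimV r2 s2) (dimV r1 s1)" using A(1) S(1) by blast
  have ex: "\<exists>k. (?E ^^ k) A = ?Z" using E_nilp[OF Ac] by blast
  define K where "K = (LEAST k. (?E ^^ k) A = ?Z)"
  have K: "(?E ^^ K) A = ?Z" unfolding K_def using ex by (rule LeastI_ex)
  have "K \<noteq> 0" proof assume "K = 0" then show False using K A(2) by simp qed
  then obtain j where j: "K = Suc j" by (cases K) auto
  have "(?E ^^ j) A \<noteq> ?Z"
  proof
    assume "(?E ^^ j) A = ?Z"
    then have "K \<le> j" unfolding K_def by (rule Least_le)
    then show False using j by simp
  qed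
  moreover have "?E ((?E ^^ j) A) = ?Z" using K j by simp
  ultimately show ?thesis by blast
qed

lemma funpow_in: "A \<in> S \<Longrightarrow> \<forall>B\<in>S. f B \<in> S \<Longrightarrow> (f ^^ j) A \<in> S"
  by (induction j) auto



lemma dimV_int: "r \<le> s \<Longrightarrow> int (dimV r s) = s - r + 1"
  by (simp add: dimV_def)

lemma ker_cond:
  fixes A :: "'a::field mat"
  assumes A: "A \<in> carrier_mat (dimV r2 s2) (dimV r1 s1)" and E: "Eo r1 s1 r2 s2 A = 0\<^sub>m (dimV r2 s2) (dimV r1 s1)"
    and pq: "p < dimV r2 s2" "q < dimV r1 s1"
  shows "(if p + 1 < dimV r2 s2 then A $$ (p+1,q) else 0) - (if q \<ge> 1 then A $$ (p,q-1) else 0) = 0"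
proof -
  have "Eo r1 s1 r2 s2 A $$ (p,q) = 0" using E pq by simp
  then show ?thesis
    using E_index[OF A pq] by simp
qed

lemma chi_zero:
  fixes A :: "'a::field mat"
  assumes A: "A \<in> carrier_mat (dimV r2 s2) (dimV r1 s1)" and E: "Eo r1 s1 r2 s2 A = 0\<^sub>m (dimV r2 s2) (dimV r1 s1)"
    and N: "nonneg_degree r1 s1 r2 s2 A" and rs: "r1 \<le> s1" "r2 \<le> s2" and ab: "s2 < s1 \<or> r2 < r1"
  shows "A = 0\<^sub>m (dimV r2 s2) (dimV r1 s1)"
proof (rule eq_matI)
  note kw = ker_walk[OF A ker_cond[OF A E]]
  fix p q assume pq: "p < dim_row (0\<^sub>m (dimV r2 s2) (dimV r1 s1) :: 'a mat)" "q < dim_col (0\<^sub>m (dimV r2 s2) (dimV r1 s1) :: 'a mat)"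
  then have pq: "p < dimV r2 s2" "q < dimV r1 s1" by auto
  show "A $$ (p,q) = 0\<^sub>m (dimV r2 s2) (dimV r1 s1) $$ (p,q)"
  proof (cases "(r2 + int p) - (r1 + int q) < 0")
    case True then show ?thesis using N pq unfolding nonneg_degree_def by auto
  next
    case False
    have n: "int (dimV r2 s2) - int (dimV r1 s1) = (s2 - s1) - (r2 - r1)"
      using dimV_int[OF rs(1)] dimV_int[OF rs(2)] by simp
    show ?thesis
    proof (cases "r2 < r1")
      case True
      then have "q < p" using False by linarith
      then show ?thesis using kw(1)[of p q] pq by auto
    next
      case f2: False
      then have "s2 < s1" using ab by simp
      then have "int p - int q > int (dimV r2 s2) - int (dimV r1 s1)" using False n by linarith
      then show ?thesis using kw(2)[of p q] pq by auto
    qed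
  qed
qed (use A in auto)

lemma part2_ker:
  fixes A :: "'a::field mat"
  assumes A: "A \<in> carrier_mat (dimV r s) (dimV r s)" and E: "Eo r s r s A = 0\<^sub>m (dimV r s) (dimV r s)"
    and N: "nonneg_degree r s r s A"
  shows "A = A $$ (0,0) \<cdot>\<^sub>m 1\<^sub>m (dimV r s)"
proof (rule eq_matI)
  note kw = ker_walk[OF A ker_cond[OF A E]]
  fix p q assume pq: "p < dim_row (A $$ (0,0) \<cdot>\<^sub>m 1\<^sub>m (dimV r s))" "q < dim_col (A $$ (0,0) \<cdot>\<^sub>m 1\<^sub>m (dimV r s))"
  then have pq: "p < dimV r s" "q < dimV r s" by auto
  show "A $$ (p,q) = (A $$ (0,0) \<cdot>\<^sub>m 1\<^sub>m (dimV r s)) $$ (p,q)"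
  proof (cases "p < q")
    case True then show ?thesis using N pq unfolding nonneg_degree_def by auto
  next
    case False
    show ?thesis
    proof (cases "p = q")
      case True then show ?thesis using kw(3)[of p] pq by simp
    next
      case False
      then have "q < p" using \<open>\<not> p < q\<close> by simp
      then show ?thesis using kw(1)[of p q] pq False by auto
    qed
  qed
qed (use A in auto)

lemma trace_E:
  fixes A :: "'a::field mat"
  assumes A: "A \<in> carrier_mat (dimV r s) (dimV r s)"
  shows "(\<Sum>p<dimV r s. Eo r s r s A $$ (p,p)) = 0"
proof -
  let ?n = "dimV r s"
  define g where "g p = (if 1 \<le> p \<and> p < ?n then A $$ (p,p-1) else 0)" for p
  have "(\<Sum>p<?n. Eo r s r s A $$ (p,p)) = (\<Sum>p<?n. g (Suc p) - g p)"
  proof (rule sum.cong)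
    fix p assume "p \<in> {..<?n}"
    then have p: "p < ?n" by simp
    show "Eo r s r s A $$ (p,p) = g (Suc p) - g p"
      using E_index[OF A p p] p by (simp add: g_def)
  qed simp
  also have "\<dots> = g ?n - g 0" by (rule sum_lessThan_telescope)
  also have "\<dots> = 0" by (simp add: g_def)
  finally show ?thesis .
qed



lemma triple_facts:
  assumes "graded_sl2_triple r s H Y"
  shows "H \<in> carrier_mat (dimV r s) (dimV r s)" "Y \<in> carrier_mat (dimV r s) (dimV r s)"
    "\<And>p q. p < dimV r s \<Longrightarrow> q < dimV r s \<Longrightarrow> p \<noteq> q \<Longrightarrow> H $$ (p, q) = 0"
    "\<And>p q. p < dimV r s \<Longrightarrow> q < dimV r s \<Longrightarrow> p \<noteq> q + 1 \<Longrightarrow> Y $$ (p, q) = 0"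
    "H * delta_mat r s - delta_mat r s * H = 2 \<cdot>\<^sub>m delta_mat r s"
    "H * Y - Y * H = (- 2) \<cdot>\<^sub>m Y"
    "delta_mat r s * Y - Y * delta_mat r s = H"
  using assms unfolding graded_sl2_triple_def by blast+

lemma H_diag:
  fixes H :: "'a::field mat"
  assumes T: "graded_sl2_triple r s H Y" and p: "p < dimV r s"
  shows "H $$ (p,p) = H $$ (0,0) - 2 * of_nat p"
  using p
proof (induction p)
  case 0 then show ?case by simp
next
  case (Suc p)
  note tf = triple_facts[OF T]
  have pp: "p < dimV r s" "p + 1 < dimV r s" using Suc by auto
  have "(H * delta_mat r s - delta_mat r s * H) $$ (p, p+1) = (2 \<cdot>\<^sub>m delta_mat r s) $$ (p, p+1)"
    using tf(5) by simp
  moreover have "(H * delta_mat r s) $$ (p, p+1) = H $$ (p,p)"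
    using diag_left[OF tf(1) tf(3) delta_carrier pp] pp by (simp add: delta_index)
  moreover have "(delta_mat r s * H) $$ (p, p+1) = H $$ (p+1,p+1)"
    using diag_right[OF tf(1) tf(3) delta_carrier pp] pp by (simp add: delta_index)
  moreover have "(H * delta_mat r s - delta_mat r s * H) $$ (p, p+1) = (H * delta_mat r s) $$ (p, p+1) - (delta_mat r s * H) $$ (p, p+1)"
    using tf(1) pp by (intro index_minus_mat(1)) auto
  ultimately have "H $$ (p,p) - H $$ (p+1,p+1) = 2"
    using pp by (simp add: delta_index)
  then show ?case using Suc pp by (simp add: algebra_simps)
qed

lemma minus_eq_add:
  fixes A :: "'a::field mat"
  assumes "A \<in> carrier_mat n m" "B \<in> carrier_mat n m" "A - B = C"
  shows "A = B + C"
proof (rule eq_matI)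
  fix i j assume ij: "i < dim_row (B + C)" "j < dim_col (B + C)"
  then have ij: "i < n" "j < m" using assms by auto
  have "C $$ (i,j) = (A - B) $$ (i,j)" using assms(3) by simp
  also have "\<dots> = A $$ (i,j) - B $$ (i,j)" using assms ij by (intro index_minus_mat(1)) auto
  finally have "C $$ (i,j) = A $$ (i,j) - B $$ (i,j)" .
  moreover have Cc: "C \<in> carrier_mat n m" using assms(3)[symmetric] assms(1,2) by auto
  ultimately show "A $$ (i,j) = (B + C) $$ (i,j)" using assms(1,2) ij by (subst index_add_mat(1)) auto
next
  have Cc: "C \<in> carrier_mat n m" using assms(3)[symmetric] assms(1,2) by auto
  then show "dim_row A = dim_row (B + C)" "dim_col A = dim_col (B + C)" using assms(1,2) by auto
qed

lemma hom_act_smult_ops: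
  assumes "X1 \<in> carrier_mat n1 n1" "X2 \<in> carrier_mat n2 n2" "A \<in> carrier_mat n2 n1"
  shows "hom_act (c \<cdot>\<^sub>m X1) (c \<cdot>\<^sub>m X2) A = c \<cdot>\<^sub>m hom_act X1 X2 A"
  unfolding hom_act_def using assms
  by (simp add: mult_smult_assoc_mat[OF assms(2,3)] mult_smult_distrib[OF assms(3,1)])
     (intro eq_matI, auto simp: algebra_simps)

lemma Y_nonneg:
  fixes A :: "'a::field mat"
  assumes T1: "graded_sl2_triple r1 s1 H1 Y1" and T2: "graded_sl2_triple r2 s2 H2 Y2"
    and A: "A \<in> carrier_mat (dimV r2 s2) (dimV r1 s1)" and N: "nonneg_degree r1 s1 r2 s2 A"
  shows "nonneg_degree r1 s1 r2 s2 (hom_act Y1 Y2 A)"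
  unfolding nonneg_degree_def
proof (intro allI impI)
  fix p q assume p: "p < dimV r2 s2" and q: "q < dimV r1 s1" and d: "r2 + int p - (r1 + int q) < 0"
  note t1 = triple_facts[OF T1] and t2 = triple_facts[OF T2]
  have "(Y2 * A) $$ (p,q) = 0"
    apply (subst mult_entry[OF t2(2) A p q])
  proof (rule sum.neutral, intro ballI)
    fix l assume l: "l \<in> {..<dimV r2 s2}"
    show "Y2 $$ (p,l) * A $$ (l,q) = 0"
    proof (cases "p = l + 1")
      case True
      then have "r2 + int l - (r1 + int q) < 0" using d by simp
      then have "A $$ (l,q) = 0" using N l q unfolding nonneg_degree_def by auto
      then show ?thesis by simp
    next
      case False then show ?thesis using t2(4)[of p l] p l by simp
    qed
  qed
  moreover have "(A * Y1) $$ (p,q) = 0"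
    apply (subst mult_entry[OF A t1(2) p q])
  proof (rule sum.neutral, intro ballI)
    fix l assume l: "l \<in> {..<dimV r1 s1}"
    show "A $$ (p,l) * Y1 $$ (l,q) = 0"
    proof (cases "l = q + 1")
      case True
      then have "r2 + int p - (r1 + int l) < 0" using d by simp
      then have "A $$ (p,l) = 0" using N l p unfolding nonneg_degree_def by auto
      then show ?thesis by simp
    next
      case False then show ?thesis using t1(4)[of l q] q l by simp
    qed
  qed
  ultimately show "hom_act Y1 Y2 A $$ (p,q) = 0"
    unfolding hom_act_def using p q A t1 t2 by simp
qed



inductive_set spanY :: "('a::field mat \<Rightarrow> 'a mat) \<Rightarrow> 'a mat \<Rightarrow> 'a mat set" for Yo and \<psi> where
  gen: "(Yo ^^ k) \<psi> \<in> spanY Yo \<psi>"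
| smul: "\<phi> \<in> spanY Yo \<psi> \<Longrightarrow> c \<cdot>\<^sub>m \<phi> \<in> spanY Yo \<psi>"
| add: "\<phi> \<in> spanY Yo \<psi> \<Longrightarrow> \<phi>' \<in> spanY Yo \<psi> \<Longrightarrow> \<phi> + \<phi>' \<in> spanY Yo \<psi>"

lemma dimV_pos: "r \<le> s \<Longrightarrow> 0 < dimV r s"
  by (simp add: dimV_def)

lemma partB:
  fixes H1 Y1 H2 Y2 :: "'a::field mat"
  assumes rs: "r1 \<le> s1" "r2 \<le> s2"
    and T1: "graded_sl2_triple r1 s1 H1 Y1" and T2: "graded_sl2_triple r2 s2 H2 Y2"
    and ab: "s1 \<le> s2" "r1 \<le> r2"
  shows "\<exists>\<psi> \<in> n_max r1 s1 H1 Y1 r2 s2 H2 Y2. \<psi> \<noteq> 0\<^sub>m (dimV r2 s2) (dimV r1 s1)"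
proof -
  define n1 where "n1 = dimV r1 s1"
  define n2 where "n2 = dimV r2 s2"
  define d0 :: int where "d0 = min 0 (int n2 - int n1)"
  define \<psi> :: "'a mat" where "\<psi> = mat n2 n1 (\<lambda>(p,q). if int p - int q = d0 then 1 else 0)"
  define Yo where "Yo = hom_act Y1 Y2"
  define Ho where "Ho = hom_act H1 H2"
  define E :: "'a mat \<Rightarrow> 'a mat" where "E = Eo r1 s1 r2 s2"
  define \<mu> :: 'a where "\<mu> = H2 $$ (0,0) - H1 $$ (0,0) - 2 * of_int d0"
  note t1 = triple_facts[OF T1, folded n1_def] and t2 = triple_facts[OF T2, folded n2_def]
  have n1p: "0 < n1" and n2p: "0 < n2" using dimV_pos rs unfolding n1_def n2_def by auto
  have nd: "int n2 - int n1 = (s2 - s1) - (r2 - r1)"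
    using dimV_int[OF rs(1)] dimV_int[OF rs(2)] unfolding n1_def n2_def by simp
  have d1: "delta_mat r1 s1 \<in> carrier_mat n1 n1" and d2: "delta_mat r2 s2 \<in> carrier_mat n2 n2"
    unfolding n1_def n2_def by auto
  have \<psi>c: "\<psi> \<in> carrier_mat n2 n1" unfolding \<psi>_def by simp
  have \<psi>i: "\<And>p q. p < n2 \<Longrightarrow> q < n1 \<Longrightarrow> \<psi> $$ (p,q) = (if int p - int q = d0 then 1 else 0)"
    unfolding \<psi>_def by simp
  have Yc: "\<And>\<chi>. \<chi> \<in> carrier_mat n2 n1 \<Longrightarrow> Yo \<chi> \<in> carrier_mat n2 n1"
    unfolding Yo_def using t1 t2 by (intro hom_act_carrier) auto
  have Hc: "\<And>\<chi>. \<chi> \<in> carrier_mat n2 n1 \<Longrightarrow> Ho \<chi> \<in> carrier_mat n2 n1"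
    unfolding Ho_def using t1 t2 by (intro hom_act_carrier) auto
  have Ec: "\<And>\<chi>. \<chi> \<in> carrier_mat n2 n1 \<Longrightarrow> E \<chi> \<in> carrier_mat n2 n1"
    unfolding E_def n1_def n2_def by (rule E_carrier)
  have \<psi>nz: "\<psi> \<noteq> 0\<^sub>m n2 n1"
  proof (cases "n1 \<le> n2")
    case True
    then have "\<psi> $$ (0,0) = 1" using \<psi>i n1p n2p by (simp add: d0_def)
    then show ?thesis using n1p n2p by auto
  next
    case False
    then have "\<psi> $$ (0,n1-n2) = 1" using \<psi>i n1p n2p by (simp add: d0_def)
    moreover have "n1 - n2 < n1" using n2p False by simp
    ultimately show ?thesis using n2p by auto
  qed
  have E\<psi>: "E \<psi> = 0\<^sub>m n2 n1"
  proof (rule eq_matI)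
    fix p q assume "p < dim_row (0\<^sub>m n2 n1 :: 'a mat)" "q < dim_col (0\<^sub>m n2 n1 :: 'a mat)"
    then have pq: "p < n2" "q < n1" by auto
    have "E \<psi> $$ (p,q) = (if p + 1 < n2 then \<psi> $$ (p+1,q) else 0) - (if q \<ge> 1 then \<psi> $$ (p,q-1) else 0)"
      unfolding E_def using E_index[of \<psi> r2 s2 r1 s1 p q] \<psi>c pq unfolding n1_def n2_def by simp
    also have "\<dots> = 0"
      using pq by (auto simp: \<psi>i d0_def)
    finally show "E \<psi> $$ (p,q) = 0\<^sub>m n2 n1 $$ (p,q)" using pq by simp
  qed (use Ec[OF \<psi>c] in auto)
  have H\<psi>: "Ho \<psi> = \<mu> \<cdot>\<^sub>m \<psi>"
  proof (rule eq_matI)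
    fix p q assume "p < dim_row (\<mu> \<cdot>\<^sub>m \<psi>)" "q < dim_col (\<mu> \<cdot>\<^sub>m \<psi>)"
    then have pq: "p < n2" "q < n1" using \<psi>c by auto
    have "Ho \<psi> $$ (p,q) = (H2 * \<psi>) $$ (p,q) - (\<psi> * H1) $$ (p,q)"
      unfolding Ho_def hom_act_def using pq \<psi>c t1(1) by (intro index_minus_mat(1)) auto
    also have "\<dots> = H2 $$ (p,p) * \<psi> $$ (p,q) - \<psi> $$ (p,q) * H1 $$ (q,q)"
      using diag_left[OF t2(1) t2(3) \<psi>c pq] diag_right[OF t1(1) t1(3) \<psi>c pq] by simp
    also have "\<dots> = \<mu> * \<psi> $$ (p,q)"
    proof (cases "int p - int q = d0")
      case True
      then have "of_int (int p - int q) = (of_int d0 :: 'a)" by simp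
      then have pe: "of_nat p = (of_int d0 :: 'a) + of_nat q" by (simp add: algebra_simps)
      have h2: "H2 $$ (p,p) = H2 $$ (0,0) - 2 * of_int d0 - 2 * of_nat q"
        using H_diag[OF T2, of p] pq pe unfolding n2_def by (simp add: algebra_simps)
      have h1: "H1 $$ (q,q) = H1 $$ (0,0) - 2 * of_nat q"
        using H_diag[OF T1, of q] pq unfolding n1_def by simp
      show ?thesis
        unfolding h1 h2 \<mu>_def using \<psi>i[OF pq] True by (simp add: algebra_simps)
    next
      case False then show ?thesis using \<psi>i[OF pq] by simp
    qed
    finally show "Ho \<psi> $$ (p,q) = (\<mu> \<cdot>\<^sub>m \<psi>) $$ (p,q)" using pq \<psi>c by simp
  qed (use Hc[OF \<psi>c] \<psi>c in auto)
  have \<psi>N: "nonneg_degree r1 s1 r2 s2 \<psi>"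
    unfolding nonneg_degree_def
  proof (intro allI impI)
    fix p q assume "p < dimV r2 s2" "q < dimV r1 s1" and d: "r2 + int p - (r1 + int q) < 0"
    then have pq: "p < n2" "q < n1" unfolding n1_def n2_def by auto
    have "int p - int q \<noteq> d0" using d nd ab unfolding d0_def by linarith
    then show "\<psi> $$ (p,q) = 0" using \<psi>i[OF pq] by simp
  qed
  have R1: "Ho (Yo \<chi>) = Yo (Ho \<chi>) + (-2) \<cdot>\<^sub>m Yo \<chi>" if c: "\<chi> \<in> carrier_mat n2 n1" for \<chi>
  proof -
    have "Ho (Yo \<chi>) - Yo (Ho \<chi>) = hom_act (H1 * Y1 - Y1 * H1) (H2 * Y2 - Y2 * H2) \<chi>"
      unfolding Ho_def Yo_def by (rule hom_act_comm[OF t1(1) t2(1) t1(2) t2(2) c])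
    also have "\<dots> = (-2) \<cdot>\<^sub>m Yo \<chi>"
      unfolding t1(6) t2(6) Yo_def by (rule hom_act_smult_ops[OF t1(2) t2(2) c])
    finally show ?thesis by (rule minus_eq_add[OF Hc[OF Yc[OF c]] Yc[OF Hc[OF c]]])
  qed
  have R2: "E (Yo \<chi>) = Yo (E \<chi>) + Ho \<chi>" if c: "\<chi> \<in> carrier_mat n2 n1" for \<chi>
  proof -
    have "E (Yo \<chi>) - Yo (E \<chi>) = hom_act (delta_mat r1 s1 * Y1 - Y1 * delta_mat r1 s1) (delta_mat r2 s2 * Y2 - Y2 * delta_mat r2 s2) \<chi>"
      unfolding E_def Yo_def by (rule hom_act_comm[OF d1 d2 t1(2) t2(2) c])
    also have "\<dots> = Ho \<chi>" unfolding t1(7) t2(7) Ho_def ..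
    finally show ?thesis by (rule minus_eq_add[OF Ec[OF Yc[OF c]] Yc[OF Ec[OF c]]])
  qed
  have YK: "(Yo ^^ k) \<psi> \<in> carrier_mat n2 n1" for k
    by (induction k) (auto simp: \<psi>c Yc)
  have Ylin: "Yo (c \<cdot>\<^sub>m \<chi>) = c \<cdot>\<^sub>m Yo \<chi>" if "\<chi> \<in> carrier_mat n2 n1" for c \<chi>
    unfolding Yo_def using t1 t2 that by (intro hom_act_smult) auto
  have Hlin: "Ho (c \<cdot>\<^sub>m \<chi>) = c \<cdot>\<^sub>m Ho \<chi>" if "\<chi> \<in> carrier_mat n2 n1" for c \<chi>
    unfolding Ho_def using t1 t2 that by (intro hom_act_smult) auto
  have Elin: "E (c \<cdot>\<^sub>m \<chi>) = c \<cdot>\<^sub>m E \<chi>" if "\<chi> \<in> carrier_mat n2 n1" for c \<chi>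
    unfolding E_def using d1 d2 that unfolding n1_def n2_def by (intro hom_act_smult) auto
  have Yadd: "Yo (\<chi> + \<chi>') = Yo \<chi> + Yo \<chi>'" if "\<chi> \<in> carrier_mat n2 n1" "\<chi>' \<in> carrier_mat n2 n1" for \<chi> \<chi>'
    unfolding Yo_def using t1 t2 that by (intro hom_act_add) auto
  have Hadd: "Ho (\<chi> + \<chi>') = Ho \<chi> + Ho \<chi>'" if "\<chi> \<in> carrier_mat n2 n1" "\<chi>' \<in> carrier_mat n2 n1" for \<chi> \<chi>'
    unfolding Ho_def using t1 t2 that by (intro hom_act_add) auto
  have Eadd: "E (\<chi> + \<chi>') = E \<chi> + E \<chi>'" if "\<chi> \<in> carrier_mat n2 n1" "\<chi>' \<in> carrier_mat n2 n1" for \<chi> \<chi>'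
    unfolding E_def using d1 d2 that unfolding n1_def n2_def by (intro hom_act_add) auto
  have HK: "Ho ((Yo ^^ k) \<psi>) = (\<mu> - 2 * of_nat k) \<cdot>\<^sub>m (Yo ^^ k) \<psi>" for k
  proof (induction k)
    case 0 then show ?case using H\<psi> by simp
  next
    case (Suc k)
    have "Ho ((Yo ^^ Suc k) \<psi>) = Yo (Ho ((Yo ^^ k) \<psi>)) + (-2) \<cdot>\<^sub>m Yo ((Yo ^^ k) \<psi>)"
      using R1[OF YK[of k]] by simp
    also have "\<dots> = (\<mu> - 2 * of_nat k) \<cdot>\<^sub>m (Yo ^^ Suc k) \<psi> + (-2) \<cdot>\<^sub>m (Yo ^^ Suc k) \<psi>"
      using Suc Ylin[OF YK[of k]] by simp
    also have "\<dots> = (\<mu> - 2 * of_nat k + (-2)) \<cdot>\<^sub>m (Yo ^^ Suc k) \<psi>"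
      by (rule add_smult_distrib_right_mat[symmetric, OF YK])
    finally show ?case by (simp add: algebra_simps)
  qed
  have EK: "\<exists>c. E ((Yo ^^ Suc k) \<psi>) = c \<cdot>\<^sub>m (Yo ^^ k) \<psi>" for k
  proof (induction k)
    case 0
    have "E ((Yo ^^ Suc 0) \<psi>) = Yo (E \<psi>) + Ho \<psi>" using R2[OF \<psi>c] by simp
    also have "\<dots> = 0\<^sub>m n2 n1 + \<mu> \<cdot>\<^sub>m \<psi>"
      using E\<psi> H\<psi> Yo_def hom_act_zero t1(2) t2(2) by metis
    also have "\<dots> = \<mu> \<cdot>\<^sub>m \<psi>" using \<psi>c by simp
    finally show ?case by auto
  next
    case (Suc k)
    then obtain c where c: "E ((Yo ^^ Suc k) \<psi>) = c \<cdot>\<^sub>m (Yo ^^ k) \<psi>" by blast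
    have "E ((Yo ^^ Suc (Suc k)) \<psi>) = Yo (E ((Yo ^^ Suc k) \<psi>)) + Ho ((Yo ^^ Suc k) \<psi>)"
      using R2[OF YK[of "Suc k"]] by simp
    also have "\<dots> = c \<cdot>\<^sub>m (Yo ^^ Suc k) \<psi> + (\<mu> - 2 * of_nat (Suc k)) \<cdot>\<^sub>m (Yo ^^ Suc k) \<psi>"
      using c Ylin[OF YK[of k]] HK[of "Suc k"] by simp
    also have "\<dots> = (c + (\<mu> - 2 * of_nat (Suc k))) \<cdot>\<^sub>m (Yo ^^ Suc k) \<psi>"
      by (rule add_smult_distrib_right_mat[symmetric, OF YK])
    finally show ?case by blast
  qed
  have NK: "nonneg_degree r1 s1 r2 s2 ((Yo ^^ k) \<psi>)" for k
  proof (induction k)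
    case 0 then show ?case using \<psi>N by simp
  next
    case (Suc k) then show ?case
      using Y_nonneg[OF T1 T2, of "(Yo ^^ k) \<psi>"] YK[of k] unfolding Yo_def n1_def n2_def by simp
  qed
  define S where "S = spanY Yo \<psi>"
  have Sc: "\<phi> \<in> carrier_mat n2 n1" if "\<phi> \<in> S" for \<phi>
    using that unfolding S_def by (induction rule: spanY.induct) (auto simp: YK)
  have SN: "nonneg_degree r1 s1 r2 s2 \<phi>" if "\<phi> \<in> S" for \<phi>
    using that unfolding S_def
  proof (induction rule: spanY.induct)
    case (gen k) then show ?case using NK by simp
  next
    case (smul \<phi> c)
    have "\<phi> \<in> carrier_mat n2 n1" using Sc smul(1) unfolding S_def by blast
    then show ?case using smul(2) unfolding nonneg_degree_def n1_def n2_def by auto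
  next
    case (add \<phi> \<phi>')
    have "\<phi> \<in> carrier_mat n2 n1" "\<phi>' \<in> carrier_mat n2 n1" using Sc add(1,2) unfolding S_def by blast+
    then show ?case using add(3,4) unfolding nonneg_degree_def n1_def n2_def by auto
  qed
  have SY: "Yo \<phi> \<in> S" if "\<phi> \<in> S" for \<phi>
    using that unfolding S_def
  proof (induction rule: spanY.induct)
    case (gen k) show ?case using spanY.gen[where Yo=Yo and k="Suc k" and \<psi>=\<psi>] by simp
  next
    case (smul \<phi> c)
    have "\<phi> \<in> carrier_mat n2 n1" using Sc smul(1) unfolding S_def by blast
    then show ?case using spanY.smul[OF smul(2)] Ylin by simp
  next
    case (add \<phi> \<phi>')
    have "\<phi> \<in> carrier_mat n2 n1" "\<phi>' \<in> carrier_mat n2 n1" using Sc add(1,2) unfolding S_def by blast+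
    then show ?case using spanY.add[OF add(3,4)] Yadd by simp
  qed
  have SH: "Ho \<phi> \<in> S" if "\<phi> \<in> S" for \<phi>
    using that unfolding S_def
  proof (induction rule: spanY.induct)
    case (gen k) show ?case using spanY.smul[OF spanY.gen[where Yo=Yo and k=k and \<psi>=\<psi>], of "\<mu> - 2 * of_nat k"] HK[of k] by simp
  next
    case (smul \<phi> c)
    have "\<phi> \<in> carrier_mat n2 n1" using Sc smul(1) unfolding S_def by blast
    then show ?case using spanY.smul[OF smul(2)] Hlin by simp
  next
    case (add \<phi> \<phi>')
    have "\<phi> \<in> carrier_mat n2 n1" "\<phi>' \<in> carrier_mat n2 n1" using Sc add(1,2) unfolding S_def by blast+
    then show ?case using spanY.add[OF add(3,4)] Hadd by simp
  qed
  have SE: "E \<phi> \<in> S" if "\<phi> \<in> S" for \<phi>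
    using that unfolding S_def
  proof (induction rule: spanY.induct)
    case (gen k) show ?case
    proof (cases k)
      case 0
      have "E \<psi> = 0 \<cdot>\<^sub>m \<psi>" using E\<psi> \<psi>c by (intro eq_matI) auto
      then show ?thesis using 0 spanY.smul[OF spanY.gen[where Yo=Yo and k=0 and \<psi>=\<psi>], of 0] by simp
    next
      case (Suc j)
      then obtain c where "E ((Yo ^^ k) \<psi>) = c \<cdot>\<^sub>m (Yo ^^ j) \<psi>" using EK by blast
      then show ?thesis using spanY.smul[OF spanY.gen[where Yo=Yo and k=j and \<psi>=\<psi>], of c] by simp
    qed
  next
    case (smul \<phi> c)
    have "\<phi> \<in> carrier_mat n2 n1" using Sc smul(1) unfolding S_def by blast
    then show ?case using spanY.smul[OF smul(2)] Elin by simp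
  next
    case (add \<phi> \<phi>')
    have "\<phi> \<in> carrier_mat n2 n1" "\<phi>' \<in> carrier_mat n2 n1" using Sc add(1,2) unfolding S_def by blast+
    then show ?case using spanY.add[OF add(3,4)] Eadd by simp
  qed
  have \<psi>S: "\<psi> \<in> S" unfolding S_def using spanY.gen[where Yo=Yo and k=0 and \<psi>=\<psi>] by simp
  have zS: "0\<^sub>m n2 n1 \<in> S"
  proof -
    have "0 \<cdot>\<^sub>m \<psi> = 0\<^sub>m n2 n1" using \<psi>c by (intro eq_matI) auto
    then show ?thesis using spanY.smul[OF \<psi>S[unfolded S_def], of 0] unfolding S_def by simp
  qed
  have sub: "hom_sl2_submodule r1 s1 H1 Y1 r2 s2 H2 Y2 S"
    unfolding hom_sl2_submodule_def
  proof (intro conjI ballI allI)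
    show "S \<subseteq> carrier_mat (dimV r2 s2) (dimV r1 s1)" using Sc unfolding n1_def n2_def by blast
    show "0\<^sub>m (dimV r2 s2) (dimV r1 s1) \<in> S" using zS unfolding n1_def n2_def .
    fix \<phi> assume p: "\<phi> \<in> S"
    show "hom_act (delta_mat r1 s1) (delta_mat r2 s2) \<phi> \<in> S" using SE[OF p] unfolding E_def .
    show "hom_act H1 H2 \<phi> \<in> S" using SH[OF p] unfolding Ho_def .
    show "hom_act Y1 Y2 \<phi> \<in> S" using SY[OF p] unfolding Yo_def .
    fix c show "c \<cdot>\<^sub>m \<phi> \<in> S" using spanY.smul p unfolding S_def by blast
  next
    fix \<phi> \<phi>' assume "\<phi> \<in> S" "\<phi>' \<in> S"
    then show "\<phi> + \<phi>' \<in> S" using spanY.add unfolding S_def by blast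
  qed
  have "\<psi> \<in> n_max r1 s1 H1 Y1 r2 s2 H2 Y2"
    unfolding n_max_def using sub SN \<psi>S by blast
  then show ?thesis using \<psi>nz unfolding n1_def n2_def by blast
qed



lemma sub_facts:
  assumes "hom_sl2_submodule r1 s1 H1 Y1 r2 s2 H2 Y2 S"
  shows "S \<subseteq> carrier_mat (dimV r2 s2) (dimV r1 s1)" "\<forall>B\<in>S. Eo r1 s1 r2 s2 B \<in> S"
  using assms unfolding hom_sl2_submodule_def by blast+

lemma zero_sub:
  fixes H1 Y1 H2 Y2 :: "'a::field mat"
  assumes T1: "graded_sl2_triple r1 s1 H1 Y1" and T2: "graded_sl2_triple r2 s2 H2 Y2"
  shows "0\<^sub>m (dimV r2 s2) (dimV r1 s1) \<in> n_max r1 s1 H1 Y1 r2 s2 H2 Y2"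
proof -
  note t1 = triple_facts[OF T1] and t2 = triple_facts[OF T2]
  let ?Z = "0\<^sub>m (dimV r2 s2) (dimV r1 s1) :: 'a mat"
  have "hom_sl2_submodule r1 s1 H1 Y1 r2 s2 H2 Y2 {?Z}"
    unfolding hom_sl2_submodule_def
    using hom_act_zero[OF delta_carrier delta_carrier] hom_act_zero[OF t1(1) t2(1)] hom_act_zero[OF t1(2) t2(2)]
    by auto
  moreover have "nonneg_degree r1 s1 r2 s2 ?Z" unfolding nonneg_degree_def by auto
  ultimately show ?thesis unfolding n_max_def by blast
qed

lemma partA:
  fixes H1 Y1 H2 Y2 :: "'a::field mat"
  assumes rs: "r1 \<le> s1" "r2 \<le> s2"
    and T1: "graded_sl2_triple r1 s1 H1 Y1" and T2: "graded_sl2_triple r2 s2 H2 Y2"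
    and ab: "s2 < s1 \<or> r2 < r1"
  shows "n_max r1 s1 H1 Y1 r2 s2 H2 Y2 = {0\<^sub>m (dimV r2 s2) (dimV r1 s1)}"
proof
  show "{0\<^sub>m (dimV r2 s2) (dimV r1 s1)} \<subseteq> n_max r1 s1 H1 Y1 r2 s2 H2 Y2"
    using zero_sub[OF T1 T2] by blast
  show "n_max r1 s1 H1 Y1 r2 s2 H2 Y2 \<subseteq> {0\<^sub>m (dimV r2 s2) (dimV r1 s1)}"
  proof
    fix \<phi> assume "\<phi> \<in> n_max r1 s1 H1 Y1 r2 s2 H2 Y2"
    then obtain S where S: "hom_sl2_submodule r1 s1 H1 Y1 r2 s2 H2 Y2 S" "\<forall>\<phi>\<in>S. nonneg_degree r1 s1 r2 s2 \<phi>" "\<phi> \<in> S"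
      unfolding n_max_def by blast
    note sf = sub_facts[OF S(1)]
    show "\<phi> \<in> {0\<^sub>m (dimV r2 s2) (dimV r1 s1)}"
    proof (rule ccontr)
      assume "\<phi> \<notin> {0\<^sub>m (dimV r2 s2) (dimV r1 s1)}"
      then have nz: "\<phi> \<noteq> 0\<^sub>m (dimV r2 s2) (dimV r1 s1)" by simp
      obtain j where j: "(Eo r1 s1 r2 s2 ^^ j) \<phi> \<noteq> 0\<^sub>m (dimV r2 s2) (dimV r1 s1)"
        "Eo r1 s1 r2 s2 ((Eo r1 s1 r2 s2 ^^ j) \<phi>) = 0\<^sub>m (dimV r2 s2) (dimV r1 s1)"
        using top_vector[OF sf S(3) nz] by blast
      have inS: "(Eo r1 s1 r2 s2 ^^ j) \<phi> \<in> S" using funpow_in[OF S(3) sf(2)] .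
      have "(Eo r1 s1 r2 s2 ^^ j) \<phi> = 0\<^sub>m (dimV r2 s2) (dimV r1 s1)"
        by (rule chi_zero[OF _ j(2) _ rs ab]) (use inS sf(1) S(2) in auto)
      then show False using j(1) by simp
    qed
  qed
qed

lemma part2:
  fixes H Y :: "'a::field_char_0 mat"
  assumes rs: "r \<le> s" and T: "graded_sl2_triple r s H Y"
  shows "n_max r s H Y r s H Y = {c \<cdot>\<^sub>m 1\<^sub>m (dimV r s) | c. True}"
proof
  let ?n = "dimV r s"
  note t = triple_facts[OF T]
  show "{c \<cdot>\<^sub>m 1\<^sub>m ?n | c. True} \<subseteq> n_max r s H Y r s H Y"
  proof -
    let ?S = "{c \<cdot>\<^sub>m 1\<^sub>m ?n | c. True} :: 'a mat set"
    have act: "hom_act X X (c \<cdot>\<^sub>m 1\<^sub>m ?n) = 0 \<cdot>\<^sub>m 1\<^sub>m ?n" if X: "X \<in> carrier_mat ?n ?n" for X c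
    proof -
      have "X * (c \<cdot>\<^sub>m 1\<^sub>m ?n) = c \<cdot>\<^sub>m X" using mult_smult_distrib[OF X, of "1\<^sub>m ?n" ?n c] X by simp
      moreover have "(c \<cdot>\<^sub>m 1\<^sub>m ?n) * X = c \<cdot>\<^sub>m X" using mult_smult_assoc_mat[of "1\<^sub>m ?n" ?n ?n X ?n c] X by simp
      ultimately show ?thesis unfolding hom_act_def using X by (intro eq_matI) auto
    qed
    have "hom_sl2_submodule r s H Y r s H Y ?S"
      unfolding hom_sl2_submodule_def
    proof (intro conjI ballI allI)
      show "?S \<subseteq> carrier_mat ?n ?n" by auto
      have "0\<^sub>m ?n ?n = (0::'a) \<cdot>\<^sub>m 1\<^sub>m ?n" by (intro eq_matI) auto
      then show "0\<^sub>m ?n ?n \<in> ?S" by blast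
    next
      fix \<phi> \<psi> assume "\<phi> \<in> ?S" "\<psi> \<in> ?S"
      then obtain a b where "\<phi> = a \<cdot>\<^sub>m 1\<^sub>m ?n" "\<psi> = b \<cdot>\<^sub>m 1\<^sub>m ?n" by blast
      then have "\<phi> + \<psi> = (a + b) \<cdot>\<^sub>m 1\<^sub>m ?n" by (intro eq_matI) (auto simp: algebra_simps)
      then show "\<phi> + \<psi> \<in> ?S" by blast
    next
      fix c \<phi> assume "\<phi> \<in> ?S"
      then obtain a where "\<phi> = a \<cdot>\<^sub>m 1\<^sub>m ?n" by blast
      then have "c \<cdot>\<^sub>m \<phi> = (c * a) \<cdot>\<^sub>m 1\<^sub>m ?n" by (intro eq_matI) auto
      then show "c \<cdot>\<^sub>m \<phi> \<in> ?S" by blast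
    next
      fix \<phi> assume "\<phi> \<in> ?S"
      then obtain a where a: "\<phi> = a \<cdot>\<^sub>m 1\<^sub>m ?n" by blast
      show "hom_act (delta_mat r s) (delta_mat r s) \<phi> \<in> ?S" unfolding a act[OF delta_carrier] by blast
      show "hom_act H H \<phi> \<in> ?S" unfolding a act[OF t(1)] by blast
      show "hom_act Y Y \<phi> \<in> ?S" unfolding a act[OF t(2)] by blast
    qed
    moreover have "\<forall>\<phi>\<in>?S. nonneg_degree r s r s \<phi>" unfolding nonneg_degree_def by auto
    ultimately show ?thesis unfolding n_max_def by blast
  qed
  show "n_max r s H Y r s H Y \<subseteq> {c \<cdot>\<^sub>m 1\<^sub>m ?n | c. True}"
  proof
    fix \<phi> assume "\<phi> \<in> n_max r s H Y r s H Y"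
    then obtain S where S: "hom_sl2_submodule r s H Y r s H Y S" "\<forall>\<phi>\<in>S. nonneg_degree r s r s \<phi>" "\<phi> \<in> S"
      unfolding n_max_def by blast
    note sf = sub_facts[OF S(1)]
    have \<phi>c: "\<phi> \<in> carrier_mat ?n ?n" using sf(1) S(3) by blast
    have E0: "Eo r s r s \<phi> = 0\<^sub>m ?n ?n"
    proof (rule ccontr)
      assume nz: "Eo r s r s \<phi> \<noteq> 0\<^sub>m ?n ?n"
      have ES: "Eo r s r s \<phi> \<in> S" using sf(2) S(3) by blast
      obtain j where j: "(Eo r s r s ^^ j) (Eo r s r s \<phi>) \<noteq> 0\<^sub>m ?n ?n"
        "Eo r s r s ((Eo r s r s ^^ j) (Eo r s r s \<phi>)) = 0\<^sub>m ?n ?n"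
        using top_vector[OF sf ES nz] by blast
      define \<chi> where "\<chi> = (Eo r s r s ^^ j) (Eo r s r s \<phi>)"
      have inS: "\<chi> \<in> S" unfolding \<chi>_def using funpow_in[OF ES sf(2)] .
      have \<chi>c: "\<chi> \<in> carrier_mat ?n ?n" using inS sf(1) by blast
      have \<chi>eq: "\<chi> = \<chi> $$ (0,0) \<cdot>\<^sub>m 1\<^sub>m ?n"
        by (rule part2_ker[OF \<chi>c j(2)[folded \<chi>_def]]) (use inS S(2) in blast)
      define \<psi> where "\<psi> = (Eo r s r s ^^ j) \<phi>"
      have \<psi>c: "\<psi> \<in> carrier_mat ?n ?n" unfolding \<psi>_def using funpow_in[OF S(3) sf(2)] sf(1) by blast
      have "\<chi> = Eo r s r s \<psi>" unfolding \<chi>_def \<psi>_def by (rule funpow_swap1[symmetric])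
      then have "(\<Sum>p<?n. \<chi> $$ (p,p)) = 0" using trace_E[OF \<psi>c] by simp
      moreover have "(\<Sum>p<?n. \<chi> $$ (p,p)) = of_nat ?n * \<chi> $$ (0,0)"
      proof -
        have "(\<Sum>p<?n. \<chi> $$ (p,p)) = (\<Sum>p<?n. \<chi> $$ (0,0))"
        proof (rule sum.cong)
          fix p assume "p \<in> {..<?n}"
          then have "p < ?n" by simp
          then have "\<chi> $$ (p,p) = (\<chi> $$ (0,0) \<cdot>\<^sub>m 1\<^sub>m ?n) $$ (p,p)" using \<chi>eq by simp
          also have "\<dots> = \<chi> $$ (0,0)" using \<open>p < ?n\<close> by simp
          finally show "\<chi> $$ (p,p) = \<chi> $$ (0,0)" .
        qed simp
        then show ?thesis by simp
      qed
      moreover have "0 < ?n" using dimV_pos[OF rs] .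
      ultimately have "\<chi> $$ (0,0) = 0" by simp
      then have "\<chi> = 0 \<cdot>\<^sub>m 1\<^sub>m ?n" using \<chi>eq by simp
      also have "\<dots> = 0\<^sub>m ?n ?n" by (intro eq_matI) auto
      finally have "\<chi> = 0\<^sub>m ?n ?n" .
      then show False using j(1) unfolding \<chi>_def by simp
    qed
    have "\<phi> = \<phi> $$ (0,0) \<cdot>\<^sub>m 1\<^sub>m ?n"
      by (rule part2_ker[OF \<phi>c E0]) (use S in blast)
    then show "\<phi> \<in> {c \<cdot>\<^sub>m 1\<^sub>m ?n | c. True}" by blast
  qed
qed


theorem mainTheorem13:
  fixes r1 s1 r2 s2 r s :: int
    and H1 Y1 H2 Y2 H Y :: "'a::field_char_0 mat"
  assumes "r1 \<le> s1" "s1 < 0" "r2 \<le> s2" "s2 < 0" "r \<le> s" "s < 0"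
    and "graded_sl2_triple r1 s1 H1 Y1"
    and "graded_sl2_triple r2 s2 H2 Y2"
    and "graded_sl2_triple r s H Y"
  shows "(n_max r1 s1 H1 Y1 r2 s2 H2 Y2 = {0\<^sub>m (dimV r2 s2) (dimV r1 s1)}
            \<longleftrightarrow> s2 < s1 \<or> r2 < r1)
         \<and> n_max r s H Y r s H Y = {c \<cdot>\<^sub>m 1\<^sub>m (dimV r s) | c. True}"
proof
  show "n_max r1 s1 H1 Y1 r2 s2 H2 Y2 = {0\<^sub>m (dimV r2 s2) (dimV r1 s1)} \<longleftrightarrow> s2 < s1 \<or> r2 < r1"
  proof
    assume h: "n_max r1 s1 H1 Y1 r2 s2 H2 Y2 = {0\<^sub>m (dimV r2 s2) (dimV r1 s1)}"
    show "s2 < s1 \<or> r2 < r1"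
    proof (rule ccontr)
      assume "\<not> (s2 < s1 \<or> r2 < r1)"
      then have "s1 \<le> s2" "r1 \<le> r2" by auto
      from partB[OF assms(1,3,7,8) this] obtain \<psi> where
        "\<psi> \<in> n_max r1 s1 H1 Y1 r2 s2 H2 Y2" "\<psi> \<noteq> 0\<^sub>m (dimV r2 s2) (dimV r1 s1)" by blast
      then show False using h by blast
    qed
  next
    assume "s2 < s1 \<or> r2 < r1"
    then show "n_max r1 s1 H1 Y1 r2 s2 H2 Y2 = {0\<^sub>m (dimV r2 s2) (dimV r1 s1)}"
      by (rule partA[OF assms(1,3,7,8)])
  qed
  show "n_max r s H Y r s H Y = {c \<cdot>\<^sub>m 1\<^sub>m (dimV r s) | c. True}"
    by (rule part2[OF assms(5,9)])
qed

end
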